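(* For any sequence of positive integers $(n_k)_{k\ge1}$ with $n_{k+1}>n_k^2$ for all $k\ge1$, there exists an infinite set $\mathcal{K}\subset\mathbb{N}$ such that $$L\Big(\{m\in\mathbb{N}: m\ge2\}\setminus\bigcup_{k\in\mathcal{K}}\{m\in\mathbb{N}: n_k\le m<n_{k+1}\}\Big)$$ is lineable but not densely lineable.
   Context: $\ell^\infty$ is the Banach space of bounded real sequences with the sup norm. For $x\in\ell^\infty$, $L_x$ denotes the set of accumulation points (subsequential limits) of $x$. For a set $A$ of cardinalities, $L(A)=\{x\in\ell^\infty: |L_x|\in A\}$. A subset $Y$ of $\ell^\infty$ is lineable if $Y\cup\{0\}$ contains an infinite-dimensional linear subspace, and densely lineable if it contains such a subspace which is dense in $\ell^\infty$. *)

theory Defs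
  imports "HOL-Analysis.Analysis"
begin

text \<open>ell-infinity is modelled as the Banach space of bounded continuous functions
  nat \<Rightarrow> real (nat carries the discrete topology, so these are exactly the bounded
  real sequences), with the sup norm.\<close>

type_synonym linf = "nat \<Rightarrow>\<^sub>C real"

definition acc_pts :: "(nat \<Rightarrow> real) \<Rightarrow> real set" where
  "acc_pts x = {l. \<exists>r. strict_mono r \<and> (x \<circ> r) \<longlonglongrightarrow> l}"

definition Lcard :: "nat set \<Rightarrow> linf set" where
  "Lcard A = {x. finite (acc_pts (apply_bcontfun x)) \<and> card (acc_pts (apply_bcontfun x)) \<in> A}"

definition lineable :: "linf set \<Rightarrow> bool" where
  "lineable Y \<longleftrightarrow> (\<exists>V. subspace V \<and> V \<subseteq> Y \<union> {0} \<and>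
      (\<exists>B. B \<subseteq> V \<and> independent B \<and> infinite B))"

definition densely_lineable :: "linf set \<Rightarrow> bool" where
  "densely_lineable Y \<longleftrightarrow> (\<exists>V. subspace V \<and> V \<subseteq> Y \<union> {0} \<and>
      (\<exists>B. B \<subseteq> V \<and> independent B \<and> infinite B) \<and> closure V = UNIV)"

end

theory Submission
  imports Defs "HOL-Library.Nat_Bijection" "HOL-Library.Countable_Set"
begin


lemma acc_ptsI: "strict_mono r \<Longrightarrow> (X \<circ> r) \<longlonglongrightarrow> l \<Longrightarrow> l \<in> acc_pts X"
  by (auto simp: acc_pts_def)

lemma subseq_conv:
  fixes Y :: "nat \<Rightarrow> real" and r :: "nat \<Rightarrow> nat"
  assumes "bounded (range Y)" "strict_mono r"
  shows "\<exists>r2 b. strict_mono r2 \<and> (Y \<circ> (r \<circ> r2)) \<longlonglongrightarrow> b"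
proof -
  have "bounded (range (Y \<circ> r))" using assms(1) by (rule bounded_subset) auto
  from bounded_imp_convergent_subsequence[OF this]
  obtain b r2 where "strict_mono r2" "((Y \<circ> r) \<circ> r2) \<longlonglongrightarrow> b"
    by blast
  then show ?thesis by (auto simp: o_assoc)
qed

lemma acc_pts_nonempty:
  fixes X :: "nat \<Rightarrow> real"
  assumes "bounded (range X)" shows "acc_pts X \<noteq> {}"
  using subseq_conv[OF assms, of id] by (auto simp: acc_pts_def strict_mono_def)

definition pacc :: "(nat\<Rightarrow>real) \<Rightarrow> (nat\<Rightarrow>real) \<Rightarrow> (real\<times>real) set" where
  "pacc X Y = {(a,b). \<exists>r. strict_mono r \<and> (X\<circ>r) \<longlonglongrightarrow> a \<and> (Y\<circ>r) \<longlonglongrightarrow> b}"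

lemma pacc_exists:
  assumes "bounded (range Y)" "a \<in> acc_pts X"
  shows "\<exists>b. (a,b) \<in> pacc X Y"
proof -
  obtain r where r: "strict_mono r" "(X\<circ>r) \<longlonglongrightarrow> a" using assms(2) by (auto simp: acc_pts_def)
  obtain r2 b where r2: "strict_mono r2" "(Y \<circ> (r \<circ> r2)) \<longlonglongrightarrow> b"
    using subseq_conv[OF assms(1) r(1)] by blast
  have "(X \<circ> (r \<circ> r2)) \<longlonglongrightarrow> a"
    using LIMSEQ_subseq_LIMSEQ[OF r(2) r2(1)] by (simp add: o_assoc)
  then show ?thesis using r2 r(1) unfolding pacc_def
    by (auto intro!: exI[of _ b] exI[of _ "r \<circ> r2"] strict_mono_o)
qed

lemma pacc_sub: "pacc X Y \<subseteq> acc_pts X \<times> acc_pts Y"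
  by (auto simp: pacc_def acc_pts_def)

lemma pacc_acc:
  assumes "(a,b) \<in> pacc X Y"
  shows "a + t*b \<in> acc_pts (\<lambda>m. X m + t * Y m)"
proof -
  obtain r where r: "strict_mono r" "(X\<circ>r) \<longlonglongrightarrow> a" "(Y\<circ>r) \<longlonglongrightarrow> b"
    using assms by (auto simp: pacc_def)
  have "((\<lambda>m. X m + t * Y m) \<circ> r) \<longlonglongrightarrow> a + t*b"
    using tendsto_add[OF r(2) tendsto_mult[OF tendsto_const r(3)]] by (simp add: o_def)
  then show ?thesis using r(1) by (rule acc_ptsI[rotated])
qed

lemma acc_sum_sub:
  fixes X Y :: "nat \<Rightarrow> real"
  assumes "bounded (range X)" "bounded (range Y)"
  shows "acc_pts (\<lambda>m. X m + t * Y m) \<subseteq> (\<lambda>(a,b). a+t*b) ` pacc X Y"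
proof
  fix l assume "l \<in> acc_pts (\<lambda>m. X m + t * Y m)"
  then obtain r where r: "strict_mono r" "((\<lambda>m. X m + t * Y m) \<circ> r) \<longlonglongrightarrow> l"
    by (auto simp: acc_pts_def)
  obtain r2 a where r2: "strict_mono r2" "(X \<circ> (r \<circ> r2)) \<longlonglongrightarrow> a"
    using subseq_conv[OF assms(1) r(1)] by blast
  have sm: "strict_mono (r \<circ> r2)" using r(1) r2(1) by (rule strict_mono_o)
  obtain r3 b where r3: "strict_mono r3" "(Y \<circ> ((r \<circ> r2) \<circ> r3)) \<longlonglongrightarrow> b"
    using subseq_conv[OF assms(2) sm] by blast
  let ?R = "r \<circ> r2 \<circ> r3"
  have sR: "strict_mono ?R" using sm r3(1) by (rule strict_mono_o)
  have xa: "(X \<circ> ?R) \<longlonglongrightarrow> a"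
    using LIMSEQ_subseq_LIMSEQ[OF r2(2) r3(1)] by (simp add: o_assoc)
  have "(((\<lambda>m. X m + t * Y m) \<circ> r) \<circ> (r2 \<circ> r3)) \<longlonglongrightarrow> l"
    using LIMSEQ_subseq_LIMSEQ[OF r(2) strict_mono_o[OF r2(1) r3(1)]] .
  hence l1: "((\<lambda>m. X m + t * Y m) \<circ> ?R) \<longlonglongrightarrow> l" by (simp add: o_assoc)
  have l2: "((\<lambda>m. X m + t * Y m) \<circ> ?R) \<longlonglongrightarrow> a + t*b"
    using tendsto_add[OF xa tendsto_mult[OF tendsto_const r3(2)]] by (simp add: o_def)
  have "l = a + t*b" using LIMSEQ_unique[OF l1 l2] .
  moreover have "(a,b) \<in> pacc X Y" unfolding pacc_def using sR xa r3(2) by auto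
  ultimately show "l \<in> (\<lambda>(a,b). a+t*b) ` pacc X Y" by force
qed



lemma acc_finite_values:
  fixes X :: "nat \<Rightarrow> real"
  assumes "\<And>m. X m \<in> F" "finite F"
  shows "acc_pts X \<subseteq> F"
proof
  fix l assume "l \<in> acc_pts X"
  then obtain r where r: "strict_mono r" "(X\<circ>r) \<longlonglongrightarrow> l" by (auto simp: acc_pts_def)
  show "l \<in> F"
    by (rule Lim_in_closed_set[OF finite_imp_closed[OF assms(2)] _ _ r(2)]) (auto simp: assms(1))
qed

lemma acc_const_sub:
  fixes X :: "nat \<Rightarrow> real" and r :: "nat \<Rightarrow> nat"
  assumes "strict_mono r" "\<And>j. X (r j) = v"
  shows "v \<in> acc_pts X"
  using assms by (intro acc_ptsI[of r]) (auto simp: o_def)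

lemma acc_zero: "acc_pts (\<lambda>_. 0::real) = {0}"
proof -
  have "l = 0" if "l \<in> acc_pts (\<lambda>_. 0::real)" for l
    using that by (auto simp: acc_pts_def o_def LIMSEQ_const_iff)
  moreover have "(0::real) \<in> acc_pts (\<lambda>_. 0)"
    by (rule acc_const_sub[of id]) (auto simp: strict_mono_def)
  ultimately show ?thesis by blast
qed

lemma uncountable_natset: "uncountable (UNIV :: nat set set)"
proof
  assume c: "countable (UNIV :: nat set set)"
  have "\<exists>f::nat \<Rightarrow> nat set. range f = UNIV"
    using uncountable_def[of "UNIV::nat set set"] c by simp
  then obtain f :: "nat \<Rightarrow> nat set" where "range f = UNIV" by blast
  then have "f ` UNIV = Pow UNIV" by simp
  then show False using Cantors_theorem[of UNIV] by auto
qed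

lemma triangle_mono: "a \<le> b \<Longrightarrow> triangle a \<le> triangle b"
  unfolding triangle_def by (intro div_le_mono mult_le_mono) auto

lemma enc_less: "a < b \<Longrightarrow> prod_encode (a, i) < prod_encode (b, i)"
  unfolding prod_encode_def using triangle_mono[of "a+i" "b+i"] by auto

lemma strict_mono_enc: "strict_mono (\<lambda>j. prod_encode (j, i))"
  by (rule strict_monoI) (rule enc_less)

lemma strict_mono_enc2: "s > 0 \<Longrightarrow> strict_mono (\<lambda>j. prod_encode (k + j * s, i))"
  by (rule strict_monoI, rule enc_less) (simp add: mult_less_mono1)



definition ysq :: "nat set \<Rightarrow> nat \<Rightarrow> real" where
  "ysq f m = (if snd (prod_decode m) \<in> f then 1 else 0)"

lemma ysq_bc: "ysq f \<in> bcontfun"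
  by (rule bcontfun_normI[where b=1]) (auto simp: ysq_def)

definition yb :: "nat set \<Rightarrow> linf" where "yb f = Bcontfun (ysq f)"

lemma yb_apply: "apply_bcontfun (yb f) = ysq f"
  by (simp add: yb_def Bcontfun_inverse[OF ysq_bc])

lemma phi_distinct:
  fixes Z Xf Xg :: "nat \<Rightarrow> real"
  assumes bZ: "bounded (range Z)" and bf: "bounded (range Xf)" and bg: "bounded (range Xg)"
    and yf: "\<And>m. \<bar>Xf m - ysq f m\<bar> < 1/8" and yg: "\<And>m. \<bar>Xg m - ysq g m\<bar> < 1/8"
    and i: "i \<in> f" "i \<notin> g"
    and ns: "\<forall>a b1 b2. (a,b1) \<in> pacc Z Xg \<longrightarrow> (a,b2) \<in> pacc Z Xg \<longrightarrow> b1 = b2"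
  shows "\<exists>a. (\<exists>b. (a,b) \<in> pacc Z Xf \<and> b > 1/2) \<and> \<not>(\<exists>b. (a,b) \<in> pacc Z Xg \<and> b > 1/2)"
proof -
  define r where "r = (\<lambda>j. prod_encode (j, i))"
  have sr: "strict_mono r" unfolding r_def by (rule strict_mono_enc)
  have hf: "Xf (r j) > 7/8" for j
  proof -
    have "ysq f (r j) = 1" using i by (simp add: ysq_def r_def)
    then show ?thesis using yf[of "r j"] abs_less_iff[of "Xf (r j) - 1" "1/8"] by linarith
  qed
  have hg: "Xg (r j) < 1/8" for j
  proof -
    have "ysq g (r j) = 0" using i by (simp add: ysq_def r_def)
    then show ?thesis using yg[of "r j"] abs_less_iff[of "Xg (r j)" "1/8"] by simp
  qed
  obtain r2 a where r2: "strict_mono r2" "(Z \<circ> (r \<circ> r2)) \<longlonglongrightarrow> a"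
    using subseq_conv[OF bZ sr] by blast
  have s1: "strict_mono (r \<circ> r2)" using sr r2(1) by (rule strict_mono_o)
  obtain r3 b1 where r3: "strict_mono r3" "(Xf \<circ> ((r \<circ> r2) \<circ> r3)) \<longlonglongrightarrow> b1"
    using subseq_conv[OF bf s1] by blast
  have s2: "strict_mono (r \<circ> r2 \<circ> r3)" using s1 r3(1) by (rule strict_mono_o)
  obtain r4 b2 where r4: "strict_mono r4" "(Xg \<circ> ((r \<circ> r2 \<circ> r3) \<circ> r4)) \<longlonglongrightarrow> b2"
    using subseq_conv[OF bg s2] by blast
  define R where "R = r \<circ> r2 \<circ> r3 \<circ> r4"
  have sR: "strict_mono R" unfolding R_def using s2 r4(1) by (rule strict_mono_o)
  have zR: "(Z \<circ> R) \<longlonglongrightarrow> a"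
    using LIMSEQ_subseq_LIMSEQ[OF r2(2) strict_mono_o[OF r3(1) r4(1)]] by (simp add: R_def o_assoc)
  have fR: "(Xf \<circ> R) \<longlonglongrightarrow> b1"
    using LIMSEQ_subseq_LIMSEQ[OF r3(2) r4(1)] by (simp add: R_def o_assoc)
  have gR: "(Xg \<circ> R) \<longlonglongrightarrow> b2" using r4(2) by (simp add: R_def o_assoc)
  have h1: "7/8 \<le> b1"
    by (rule LIMSEQ_le_const[OF fR]) (use hf in \<open>auto simp: R_def intro!: less_imp_le\<close>)
  have h2: "b2 \<le> 1/8"
    by (rule LIMSEQ_le_const2[OF gR]) (use hg in \<open>auto simp: R_def intro!: less_imp_le\<close>)
  have p1: "(a,b1) \<in> pacc Z Xf" unfolding pacc_def using sR zR fR by auto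
  have p2: "(a,b2) \<in> pacc Z Xg" unfolding pacc_def using sR zR gR by auto
  have B: "\<not>(\<exists>b. (a,b) \<in> pacc Z Xg \<and> b > 1/2)"
  proof
    assume "\<exists>b. (a,b) \<in> pacc Z Xg \<and> b > 1/2"
    then obtain b where b: "(a,b) \<in> pacc Z Xg" "b > 1/2" by blast
    with ns p2 have "b = b2" by blast
    with h2 b(2) show False by simp
  qed
  have "b1 > 1/2" using h1 by simp
  then show ?thesis using p1 B by blast
qed



lemma acc_zero_bc: "acc_pts (apply_bcontfun (0::linf)) = {0}"
  by (simp add: acc_zero)

lemma step_lemma:
  fixes V :: "linf set" and A :: "nat set" and X :: "nat set \<Rightarrow> nat \<Rightarrow> real"
  assumes sub: "subspace V" and VA: "V \<subseteq> Lcard A \<union> {0}"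
    and xV: "\<And>f. xf f \<in> V" and Xdef: "\<And>f. X f = apply_bcontfun (xf f)"
    and Xy: "\<And>f m. \<bar>X f m - ysq f m\<bar> < 1/8"
    and Cinf: "infinite C" and Cc: "\<And>f. f \<in> C \<Longrightarrow> card (acc_pts (X f)) = c"
    and cT: "c < T" and hT: "\<forall>v\<in>A. v < T*T \<longrightarrow> v < T"
    and zV: "z \<in> V" and zfin: "finite (acc_pts (apply_bcontfun z))"
    and z1: "1 \<le> card (acc_pts (apply_bcontfun z))" and zT: "card (acc_pts (apply_bcontfun z)) < T"
  shows "\<exists>w\<in>V. finite (acc_pts (apply_bcontfun w)) \<and> 1 \<le> card (acc_pts (apply_bcontfun w))
     \<and> card (acc_pts (apply_bcontfun z)) + 1 \<le> card (acc_pts (apply_bcontfun w))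
     \<and> card (acc_pts (apply_bcontfun w)) < T"
proof -
  define Z where "Z = apply_bcontfun z"
  define S where "S = acc_pts Z"
  define v where "v = card S"
  have bZ: "bounded (range Z)" unfolding Z_def by simp
  have bX: "bounded (range (X f))" for f unfolding Xdef by simp
  have finS: "finite S" using zfin by (simp add: S_def Z_def)
  define ns where "ns f = (\<forall>a b1 b2. (a,b1) \<in> pacc Z (X f) \<longrightarrow> (a,b2) \<in> pacc Z (X f) \<longrightarrow> b1 = b2)" for f
  define \<Phi> where "\<Phi> f = {a. \<exists>b. (a,b) \<in> pacc Z (X f) \<and> b > 1/2}" for f
  have inj: "inj_on \<Phi> (C \<inter> {f. ns f})"
  proof (rule inj_onI)
    fix f g assume f: "f \<in> C \<inter> {f. ns f}" and g: "g \<in> C \<inter> {f. ns f}" and eq: "\<Phi> f = \<Phi> g"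
    show "f = g"
    proof (rule ccontr)
      assume "f \<noteq> g"
      then obtain i where "(i \<in> f) \<noteq> (i \<in> g)" by blast
      then consider "i \<in> f" "i \<notin> g" | "i \<in> g" "i \<notin> f" by blast
      then show False
      proof cases
        case 1
        from phi_distinct[OF bZ bX bX Xy Xy 1] g obtain a where
          "(\<exists>b. (a,b) \<in> pacc Z (X f) \<and> b > 1/2)" "\<not>(\<exists>b. (a,b) \<in> pacc Z (X g) \<and> b > 1/2)"
          by (auto simp: ns_def)
        then have "a \<in> \<Phi> f" "a \<notin> \<Phi> g" by (auto simp: \<Phi>_def)
        then show False using eq by simp
      next
        case 2
        from phi_distinct[OF bZ bX bX Xy Xy 2] f obtain a where
          "(\<exists>b. (a,b) \<in> pacc Z (X g) \<and> b > 1/2)" "\<not>(\<exists>b. (a,b) \<in> pacc Z (X f) \<and> b > 1/2)"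
          by (auto simp: ns_def)
        then have "a \<in> \<Phi> g" "a \<notin> \<Phi> f" by (auto simp: \<Phi>_def)
        then show False using eq by simp
      qed
    qed
  qed
  have "\<Phi> ` (C \<inter> {f. ns f}) \<subseteq> Pow S"
    using pacc_sub by (fastforce simp: \<Phi>_def S_def)
  then have "finite (C \<inter> {f. ns f})"
    using inj_on_finite[OF inj] finS by blast
  then obtain f where fC: "f \<in> C" and nns: "\<not> ns f"
    using Cinf by (metis Int_Collect finite_subset subsetI)
  define Xx where "Xx = X f"
  have bXx: "bounded (range Xx)" unfolding Xx_def by (rule bX)
  from nns obtain a0 b1 b2 where ab: "(a0,b1) \<in> pacc Z Xx" "(a0,b2) \<in> pacc Z Xx" "b1 \<noteq> b2"
    by (auto simp: ns_def Xx_def)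
  have "\<forall>a\<in>S. \<exists>b. (a,b) \<in> pacc Z Xx"
    using pacc_exists[OF bXx] by (auto simp: S_def)
  then obtain bs where bs: "\<And>a. a \<in> S \<Longrightarrow> (a, bs a) \<in> pacc Z Xx" by metis
  define b' where "b' = (if bs a0 = b1 then b2 else b1)"
  have b'1: "(a0,b') \<in> pacc Z Xx" using ab by (simp add: b'_def)
  have b'2: "b' \<noteq> bs a0" using ab(3) by (auto simp: b'_def)
  define T0 where "T0 = insert (a0,b') ((\<lambda>a. (a, bs a)) ` S)"
  have finT0: "finite T0" using finS by (simp add: T0_def)
  have cardT0: "card T0 = v + 1"
  proof -
    have "(a0,b') \<notin> (\<lambda>a. (a, bs a)) ` S" using b'2 by auto
    moreover have "card ((\<lambda>a. (a, bs a)) ` S) = v"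
      unfolding v_def by (rule card_image) (auto simp: inj_on_def)
    ultimately show ?thesis unfolding T0_def using finS by simp
  qed
  have T0p: "T0 \<subseteq> pacc Z Xx" using b'1 bs by (auto simp: T0_def)
  define bad where "bad = (\<lambda>(p,q). (fst q - fst p) / (snd p - snd q)) ` (T0 \<times> T0)"
  have finbad: "finite bad" using finT0 by (simp add: bad_def)
  define t where "t = Max (insert 0 bad) + 1"
  have tgt: "x < t" if "x \<in> insert 0 bad" for x
  proof -
    have "x \<le> Max (insert 0 bad)" using Max_ge[of "insert 0 bad" x] finbad that by simp
    then show ?thesis by (simp add: t_def)
  qed
  have tpos: "t > 0" using tgt[of 0] by simp
  have tnb: "t \<notin> bad" using tgt by fastforce
  define \<phi> where "\<phi> = (\<lambda>(a::real,b::real). a + t*b)"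
  have injT: "inj_on \<phi> T0"
  proof (rule inj_onI)
    fix p q assume p: "p \<in> T0" and q: "q \<in> T0" and e: "\<phi> p = \<phi> q"
    obtain ap bp where pp: "p = (ap,bp)" by fastforce
    obtain aq bq where qq: "q = (aq,bq)" by fastforce
    have e': "ap + t*bp = aq + t*bq" using e by (simp add: \<phi>_def pp qq)
    show "p = q"
    proof (cases "bp = bq")
      case True then show ?thesis using e' pp qq by simp
    next
      case False
      then have "t = (aq - ap) / (bp - bq)" using e' by (simp add: field_simps)
      moreover have "(aq - ap) / (bp - bq) \<in> bad" unfolding bad_def using p q pp qq
        by (auto intro!: image_eqI[of _ _ "((ap,bp),(aq,bq))"])
      ultimately show ?thesis using tnb by simp
    qed
  qed
  define w where "w = z + t *\<^sub>R xf f"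
  define W where "W = apply_bcontfun w"
  have Wdef: "W = (\<lambda>m. Z m + t * Xx m)" by (auto simp: W_def w_def Z_def Xx_def Xdef)
  have wV: "w \<in> V" unfolding w_def using sub zV xV by (intro subspace_add subspace_scale) auto
  have sup: "\<phi> ` T0 \<subseteq> acc_pts W"
    using T0p pacc_acc[of _ _ Z Xx t] by (auto simp: Wdef \<phi>_def)
  have sub2: "acc_pts W \<subseteq> \<phi> ` (S \<times> acc_pts Xx)"
  proof -
    have "acc_pts W \<subseteq> \<phi> ` pacc Z Xx" unfolding Wdef \<phi>_def by (rule acc_sum_sub[OF bZ bXx])
    also have "\<dots> \<subseteq> \<phi> ` (S \<times> acc_pts Xx)" using pacc_sub by (auto simp: S_def)
    finally show ?thesis .
  qed
  have cXx: "card (acc_pts Xx) = c" using Cc[OF fC] by (simp add: Xx_def)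
  have finXx: "finite (acc_pts Xx)"
  proof (rule ccontr)
    assume "infinite (acc_pts Xx)"
    then have "c = 0" using cXx by simp
    moreover
    have "xf f \<in> Lcard A \<union> {0}" using xV VA by blast
    then have "finite (acc_pts Xx)" by (auto simp: Lcard_def Xx_def Xdef acc_zero)
    ultimately show False using \<open>infinite (acc_pts Xx)\<close> by simp
  qed
  have finW: "finite (acc_pts W)"
    using finite_subset[OF sub2] finS finXx by simp
  have lo: "v + 1 \<le> card (acc_pts W)"
    using card_mono[OF finW sup] card_image[OF injT] cardT0 by simp
  have "card (acc_pts W) \<le> card (\<phi> ` (S \<times> acc_pts Xx))"
    using card_mono[OF _ sub2] finS finXx by simp
  also have "\<dots> \<le> card (S \<times> acc_pts Xx)" by (rule card_image_le) (use finS finXx in simp)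
  also have "\<dots> = v * c" by (simp add: card_cartesian_product v_def cXx)
  finally have up: "card (acc_pts W) \<le> v * c" .
  have v1: "1 \<le> v" using z1 by (simp add: v_def S_def Z_def)
  have vT: "v < T" using zT by (simp add: v_def S_def Z_def)
  have "w \<noteq> 0"
  proof
    assume "w = 0"
    then have "acc_pts W = {0}" by (simp add: W_def acc_zero)
    then show False using lo v1 by simp
  qed
  then have "w \<in> Lcard A" using wV VA by blast
  then have inA: "card (acc_pts W) \<in> A" by (simp add: Lcard_def W_def)
  have "v * c < T * T" using vT cT by (simp add: mult_strict_mono)
  then have "card (acc_pts W) < T" using hT inA up by fastforce
  then show ?thesis using wV finW lo v1
    by (intro bexI[of _ w]) (auto simp: W_def[symmetric] v_def S_def Z_def)
qed



lemma not_dense: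
  fixes V :: "linf set" and A :: "nat set"
  assumes sub: "subspace V" and VA: "V \<subseteq> Lcard A \<union> {0}" and cl: "closure V = UNIV"
    and hA: "\<forall>c. \<exists>T>c. \<forall>v\<in>A. v < T*T \<longrightarrow> v < T"
  shows False
proof -
  have "\<exists>x\<in>V. dist x (yb f) < 1/8" for f
  proof -
    have "\<forall>\<epsilon>>0. \<exists>y\<in>V. dist y (yb f) < \<epsilon>" using cl closure_approachable[of "yb f" V] by simp
    then show ?thesis by (meson divide_pos_pos zero_less_numeral zero_less_one)
  qed
  then obtain xf where xf: "\<And>f. xf f \<in> V" "\<And>f. dist (xf f) (yb f) < 1/8" by metis
  define X where "X f = apply_bcontfun (xf f)" for f
  have Xy: "\<bar>X f m - ysq f m\<bar> < 1/8" for f m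
    using dist_bounded[of "xf f" m "yb f"] xf(2)[of f] by (simp add: X_def yb_apply dist_real_def)
  have finX: "finite (acc_pts (apply_bcontfun z))" if "z \<in> V" for z
  proof -
    have "z \<in> Lcard A \<union> {0}" using that VA by blast
    then show ?thesis by (auto simp: Lcard_def acc_zero)
  qed
  define cnt where "cnt f = card (acc_pts (X f))" for f
  have "\<exists>c. infinite {f. cnt f = c}"
  proof (rule ccontr)
    assume "\<not> ?thesis"
    then have "countable (\<Union>c. {f. cnt f = c})" by (auto intro: countable_finite)
    moreover have "(\<Union>c. {f. cnt f = c}) = UNIV" by auto
    ultimately show False using uncountable_natset by simp
  qed
  then obtain c where Cinf: "infinite {f. cnt f = c}" by blast
  obtain T where cT: "c < T" and hT: "\<forall>v\<in>A. v < T*T \<longrightarrow> v < T" using hA by blast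
  have main: "\<exists>z\<in>V. finite (acc_pts (apply_bcontfun z)) \<and> 1 \<le> card (acc_pts (apply_bcontfun z))
     \<and> i \<le> card (acc_pts (apply_bcontfun z)) \<and> card (acc_pts (apply_bcontfun z)) < T" for i
  proof (induction i)
    case 0
    obtain f0 where f0: "f0 \<in> {f. cnt f = c}" using Cinf by (metis finite.emptyI ex_in_conv)
    have fin: "finite (acc_pts (apply_bcontfun (xf f0)))" using finX xf(1) by blast
    have "acc_pts (apply_bcontfun (xf f0)) \<noteq> {}" by (rule acc_pts_nonempty) simp
    then have "1 \<le> card (acc_pts (apply_bcontfun (xf f0)))" using fin
      by (simp add: Suc_le_eq card_gt_0_iff)
    moreover have "card (acc_pts (apply_bcontfun (xf f0))) < T" using f0 cT by (simp add: cnt_def X_def)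
    ultimately show ?case using fin xf(1) by blast
  next
    case (Suc i)
    then obtain z where z: "z \<in> V" "finite (acc_pts (apply_bcontfun z))" "1 \<le> card (acc_pts (apply_bcontfun z))"
      "i \<le> card (acc_pts (apply_bcontfun z))" "card (acc_pts (apply_bcontfun z)) < T" by blast
    from step_lemma[OF sub VA xf(1) X_def Xy Cinf _ cT hT z(1,2,3,5)]
    obtain w where "w \<in> V" "finite (acc_pts (apply_bcontfun w))" "1 \<le> card (acc_pts (apply_bcontfun w))"
      "card (acc_pts (apply_bcontfun z)) + 1 \<le> card (acc_pts (apply_bcontfun w))"
      "card (acc_pts (apply_bcontfun w)) < T" by (auto simp: cnt_def)
    then show ?case using z(4) by (intro bexI[of _ w]) auto
  qed
  from main[of T] show False by auto
qed



definition Ev :: "(nat \<Rightarrow> nat) \<Rightarrow> nat \<Rightarrow> nat \<Rightarrow> real" where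
  "Ev s d m = real (fst (prod_decode m) mod s d) + 1"

definition Esq :: "(nat \<Rightarrow> nat) \<Rightarrow> nat \<Rightarrow> nat \<Rightarrow> real" where
  "Esq s d m = (if snd (prod_decode m) = d then Ev s d m else 0)"

lemma Esq_bc: "s d > 0 \<Longrightarrow> Esq s d \<in> bcontfun"
  by (rule bcontfun_normI[where b="real (s d) + 1"]) (auto simp: Esq_def Ev_def less_imp_le)

definition eb :: "(nat \<Rightarrow> nat) \<Rightarrow> nat \<Rightarrow> linf" where "eb s d = Bcontfun (Esq s d)"

lemma eb_apply: "s d > 0 \<Longrightarrow> apply_bcontfun (eb s d) = Esq s d"
  by (simp add: eb_def Bcontfun_inverse[OF Esq_bc])

lemma apply_sum: "apply_bcontfun (\<Sum>d\<in>D. g d :: linf) m = (\<Sum>d\<in>D. apply_bcontfun (g d) m)"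
  by (induction D rule: infinite_finite_induct) auto

lemma eval_comb:
  assumes spos: "\<And>d. s d > 0" and "finite D"
  shows "apply_bcontfun (\<Sum>d\<in>D. c d *\<^sub>R eb s d) m =
    (if snd (prod_decode m) \<in> D then c (snd (prod_decode m)) * Ev s (snd (prod_decode m)) m else 0)"
proof -
  have "apply_bcontfun (\<Sum>d\<in>D. c d *\<^sub>R eb s d) m = (\<Sum>d\<in>D. c d * Esq s d m)"
    by (simp add: apply_sum eb_apply[of s, OF spos])
  also have "\<dots> = (\<Sum>d\<in>D. if snd (prod_decode m) = d then c d * Ev s d m else 0)"
    by (rule sum.cong) (auto simp: Esq_def)
  also have "\<dots> = (if snd (prod_decode m) \<in> D then c (snd (prod_decode m)) * Ev s (snd (prod_decode m)) m else 0)"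
    using assms(2) by (simp add: sum.delta)
  finally show ?thesis .
qed

lemma Ev_enc: "s d > 0 \<Longrightarrow> Ev s d (prod_encode (k + j * s d, i)) = real (k mod s d) + 1"
  by (simp add: Ev_def)

lemma comb_in_L:
  assumes spos: "\<And>d. s d > 0" and finD: "finite D"
    and hA: "\<And>d m. s d \<le> m \<Longrightarrow> m \<le> 1 + (\<Sum>d'\<le>d. s d') \<Longrightarrow> m \<in> A"
    and nz: "(\<Sum>d\<in>D. c d *\<^sub>R eb s d) \<noteq> 0"
  shows "(\<Sum>d\<in>D. c d *\<^sub>R eb s d) \<in> Lcard A"
proof -
  define x where "x = (\<Sum>d\<in>D. c d *\<^sub>R eb s d)"
  define X where "X = apply_bcontfun x"
  define col where "col m = snd (prod_decode m)" for m
  have Xm: "X m = (if col m \<in> D then c (col m) * Ev s (col m) m else 0)" for m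
    unfolding X_def x_def col_def by (rule eval_comb[OF spos finD])
  define D' where "D' = {d\<in>D. c d \<noteq> 0}"
  have finD': "finite D'" using finD by (simp add: D'_def)
  have "D' \<noteq> {}"
  proof
    assume "D' = {}"
    then have "X m = 0" for m using Xm by (auto simp: D'_def)
    then have "x = 0" by (intro bcontfun_eqI) (simp add: X_def)
    then show False using nz by (simp add: x_def)
  qed
  define d0 where "d0 = Max D'"
  have d0D: "d0 \<in> D'" using finD' \<open>D' \<noteq> {}\<close> by (simp add: d0_def)
  have d0le: "d \<le> d0" if "d \<in> D'" for d using finD' that by (simp add: d0_def)
  define F where "F = insert 0 (\<Union>d\<in>D'. (\<lambda>k. c d * (real k + 1)) ` {..<s d})"
  have finF: "finite F" using finD' by (simp add: F_def)
  have XF: "X m \<in> F" for m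
  proof (cases "col m \<in> D \<and> c (col m) \<noteq> 0")
    case True
    then have "col m \<in> D'" by (simp add: D'_def)
    moreover have "fst (prod_decode m) mod s (col m) < s (col m)" using spos by simp
    ultimately show ?thesis using True by (auto simp: Xm F_def Ev_def)
  next
    case False then show ?thesis by (auto simp: Xm F_def)
  qed
  have accF: "acc_pts X \<subseteq> F" by (rule acc_finite_values[OF XF finF])
  have finacc: "finite (acc_pts X)" using finite_subset[OF accF finF] .
  have "card F \<le> Suc (card (\<Union>d\<in>D'. (\<lambda>k. c d * (real k + 1)) ` {..<s d}))"
    unfolding F_def by (rule card_insert_le_m1) auto
  also have "card (\<Union>d\<in>D'. (\<lambda>k. c d * (real k + 1)) ` {..<s d}) \<le> (\<Sum>d\<in>D'. card ((\<lambda>k. c d * (real k + 1)) ` {..<s d}))"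
    by (rule card_UN_le[OF finD'])
  also have "\<dots> \<le> (\<Sum>d\<in>D'. s d)"
    by (rule sum_mono) (metis card_image_le card_lessThan finite_lessThan)
  also have "\<dots> \<le> (\<Sum>d\<le>d0. s d)"
    by (rule sum_mono2) (auto simp: d0le)
  finally have up: "card (acc_pts X) \<le> 1 + (\<Sum>d\<le>d0. s d)"
    using card_mono[OF finF accF] by simp
  define G where "G = (\<lambda>k. c d0 * (real k + 1)) ` {..<s d0}"
  have c0: "c d0 \<noteq> 0" "d0 \<in> D" using d0D by (auto simp: D'_def)
  have "G \<subseteq> acc_pts X"
  proof
    fix y assume "y \<in> G"
    then obtain k where k: "k < s d0" "y = c d0 * (real k + 1)" by (auto simp: G_def)
    show "y \<in> acc_pts X"
    proof (rule acc_const_sub[OF strict_mono_enc2[OF spos[of d0], of k d0]])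
      fix j
      show "X (prod_encode (k + j * s d0, d0)) = y"
        using k c0 by (simp add: Xm col_def Ev_enc[of s, OF spos])
    qed
  qed
  moreover have "card G = s d0"
    unfolding G_def using c0 by (subst card_image) (auto simp: inj_on_def)
  ultimately have lo: "s d0 \<le> card (acc_pts X)" using card_mono[OF finacc] by metis
  have "card (acc_pts X) \<in> A" using hA[OF lo up] .
  then show ?thesis using finacc by (simp add: Lcard_def X_def x_def)
qed

lemma lineable_constr:
  fixes s :: "nat \<Rightarrow> nat" and A :: "nat set"
  assumes spos: "\<And>d. s d > 0"
    and hA: "\<And>d m. s d \<le> m \<Longrightarrow> m \<le> 1 + (\<Sum>d'\<le>d. s d') \<Longrightarrow> m \<in> A"
  shows "lineable (Lcard A)"
proof -
  define e where "e = eb s"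
  have ev0: "apply_bcontfun (e d) (prod_encode (0, d')) = (if d' = d then 1 else 0)" for d d'
    by (simp add: e_def eb_apply[of s, OF spos] Esq_def Ev_def)
  have inje: "inj e"
  proof (rule injI)
    fix d d' assume "e d = e d'"
    then have "apply_bcontfun (e d) (prod_encode (0, d)) = apply_bcontfun (e d') (prod_encode (0, d))" by simp
    then show "d = d'" by (simp add: ev0 split: if_splits)
  qed
  have reindex: "\<exists>D c. finite D \<and> (\<Sum>a\<in>t. r a *\<^sub>R a) = (\<Sum>d\<in>D. c d *\<^sub>R eb s d) \<and> t = e ` D \<and> (\<forall>d\<in>D. c d = r (e d))"
    if "finite t" "t \<subseteq> range e" for t and r :: "linf \<Rightarrow> real"
  proof -
    define D where "D = e -` t"
    have tD: "t = e ` D" using that(2) by (auto simp: D_def)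
    have finD: "finite D" unfolding D_def using that(1) inje by (simp add: finite_vimageI)
    have "(\<Sum>a\<in>t. r a *\<^sub>R a) = (\<Sum>d\<in>D. r (e d) *\<^sub>R e d)"
      unfolding tD by (rule sum.reindex_cong[where l=e]) (use inje in \<open>auto simp: inj_on_def\<close>)
    then show ?thesis using finD tD by (intro exI[of _ D] exI[of _ "\<lambda>d. r (e d)"]) (simp add: e_def)
  qed
  have "span (range e) \<subseteq> Lcard A \<union> {0}"
  proof
    fix x assume "x \<in> span (range e)"
    then obtain t r where t: "finite t" "t \<subseteq> range e" "x = (\<Sum>a\<in>t. r a *\<^sub>R a)"
      unfolding span_explicit by blast
    from reindex[where r=r, OF t(1) t(2)] obtain D c where D0: "finite D" "(\<Sum>a\<in>t. r a *\<^sub>R a) = (\<Sum>d\<in>D. c d *\<^sub>R eb s d)"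
      by blast
    then have D: "finite D" "x = (\<Sum>d\<in>D. c d *\<^sub>R eb s d)" using t(3) by simp_all
    show "x \<in> Lcard A \<union> {0}"
    proof (cases "x = 0")
      case False then show ?thesis using comb_in_L[OF spos D(1) hA] D(2) by auto
    qed simp
  qed
  moreover have "independent (range e)"
    unfolding independent_explicit_finite_subsets
  proof (intro allI impI ballI)
    fix t u a assume t: "t \<subseteq> range e" "finite t" and sum0: "(\<Sum>v\<in>t. u v *\<^sub>R v) = 0" and a: "a \<in> t"
    obtain D c where D: "finite D" "(\<Sum>v\<in>t. u v *\<^sub>R v) = (\<Sum>d\<in>D. c d *\<^sub>R eb s d)" "t = e ` D"
      "\<forall>d\<in>D. c d = u (e d)" using reindex[where r=u, OF t(2) t(1)] by blast
    obtain d where d: "d \<in> D" "a = e d" using a D(3) by auto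
    have "apply_bcontfun (\<Sum>d\<in>D. c d *\<^sub>R eb s d) (prod_encode (0, d)) = 0"
      using D(2) sum0 by simp
    then have "c d = 0" using d(1) by (simp add: eval_comb[OF spos D(1)] Ev_def)
    then show "u a = 0" using D(4) d by simp
  qed
  moreover have "infinite (range e)" using range_inj_infinite[OF inje] .
  ultimately have "span (range e) \<subseteq> Lcard A \<union> {0}"
    "range e \<subseteq> span (range e) \<and> independent (range e) \<and> infinite (range e)"
    by (auto intro: span_base)
  then show ?thesis unfolding lineable_def using subspace_span by blast
qed



theorem corollary2p9:
  fixes n :: "nat \<Rightarrow> nat"
  assumes pos: "\<And>k. k \<ge> 1 \<Longrightarrow> n k > 0"
    and growth: "\<And>k. k \<ge> 1 \<Longrightarrow> n (k + 1) > (n k)\<^sup>2"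
  shows "\<exists>K. K \<subseteq> {1..} \<and> infinite K \<and>
    lineable (Lcard ({m. m \<ge> 2} - (\<Union>k\<in>K. {m. n k \<le> m \<and> m < n (k + 1)}))) \<and>
    \<not> densely_lineable (Lcard ({m. m \<ge> 2} - (\<Union>k\<in>K. {m. n k \<le> m \<and> m < n (k + 1)})))"
proof -
  have nsuc: "n k < n (k+1)" if "k \<ge> 1" for k
  proof -
    have "n k \<le> (n k)\<^sup>2" using pos[OF that] by (simp add: power2_eq_square)
    then show ?thesis using growth[OF that] by linarith
  qed
  have nmono: "n a < n b" if "1 \<le> a" "a < b" for a b
    using that(2)
  proof (induction b)
    case 0 then show ?case by simp
  next
    case (Suc b)
    show ?case
    proof (cases "a = b")
      case True then show ?thesis using nsuc[of a] that(1) by simp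
    next
      case False
      then have "a < b" using Suc.prems by simp
      then show ?thesis using Suc.IH nsuc[of b] that(1) by fastforce
    qed
  qed
  have nmono': "n a \<le> n b" if "1 \<le> a" "a \<le> b" for a b
    using nmono[OF that(1), of b] that(2) by (cases "a = b") auto
  have nge: "k \<le> n k" if "k \<ge> 1" for k
    using that
  proof (induction k)
    case 0 then show ?case by simp
  next
    case (Suc k)
    show ?case
    proof (cases "k = 0")
      case True then show ?thesis using pos[of 1] by simp
    next
      case False then show ?thesis using Suc.IH nsuc[of k] by simp
    qed
  qed
  have ndouble: "2 * n k < n (k+1)" if "k \<ge> 2" for k
  proof -
    have "2 \<le> n k" using nge[of k] that by simp
    then have "2 * n k \<le> (n k)\<^sup>2" by (simp add: power2_eq_square)
    then show ?thesis using growth[of k] that by simp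
  qed
  define K where "K = {k::nat. 2 \<le> k \<and> even k}"
  define A where "A = {m::nat. m \<ge> 2} - (\<Union>k\<in>K. {m. n k \<le> m \<and> m < n (k + 1)})"
  have K1: "K \<subseteq> {1..}" by (auto simp: K_def)
  have Kinf: "infinite K"
    unfolding infinite_nat_iff_unbounded K_def
    by (intro allI, rule_tac x="2*m+2" in exI) auto
  define s where "s d = n (2*d+3)" for d
  have spos: "s d > 0" for d using pos by (simp add: s_def)
  have sumb: "1 + (\<Sum>d'\<le>d. s d') \<le> 2 * s d" for d
  proof (induction d)
    case 0 then show ?case using spos[of 0] by simp
  next
    case (Suc d)
    have "2 * s d < s (Suc d)"
    proof -
      have "2 * n (2*d+3) < n (2*d+3+1)" by (rule ndouble) simp
      also have "\<dots> \<le> n (2*d+5)" by (rule nmono') auto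
      finally have "2 * n (2*d+3) < n (2*d+5)" .
      moreover have "2*Suc d+3 = 2*d+5" by simp
      ultimately show ?thesis unfolding s_def by metis
    qed
    then show ?case using Suc.IH by simp
  qed
  have hA1: "m \<in> A" if "s d \<le> m" "m \<le> 1 + (\<Sum>d'\<le>d. s d')" for d m
  proof -
    define k where "k = 2*d+3"
    have lo: "n k \<le> m" using that(1) by (simp add: s_def k_def)
    have hi: "m < n (k+1)"
    proof -
      have "m \<le> 2 * n k" using that(2) sumb[of d] by (simp add: s_def k_def)
      also have "\<dots> < n (k+1)" by (rule ndouble) (simp add: k_def)
      finally show ?thesis .
    qed
    have m2: "2 \<le> m" using lo nge[of k] by (simp add: k_def)
    have "\<not> (n k' \<le> m \<and> m < n (k' + 1))" if "k' \<in> K" for k'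
    proof -
      have "k' \<noteq> k" using that by (auto simp: K_def k_def)
      then have "k' + 1 \<le> k \<or> k + 1 \<le> k'" by linarith
      then consider "k' + 1 \<le> k" | "k + 1 \<le> k'" by blast
      then show ?thesis
      proof cases
        case 1
        then have "n (k'+1) \<le> n k" by (intro nmono') auto
        then show ?thesis using lo by simp
      next
        case 2
        then have "n (k+1) \<le> n k'" by (intro nmono') auto
        then show ?thesis using hi by simp
      qed
    qed
    then show ?thesis using m2 by (auto simp: A_def)
  qed
  have lin: "lineable (Lcard A)" by (rule lineable_constr[OF spos hA1]) auto
  have hA2: "\<forall>c. \<exists>T>c. \<forall>v\<in>A. v < T*T \<longrightarrow> v < T"
  proof
    fix c :: nat
    define j :: nat where "j = 2*c+2"
    have jK: "j \<in> K" by (simp add: K_def j_def)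
    have "c < n j" using nge[of j] by (simp add: j_def)
    moreover have "\<forall>v\<in>A. v < n j * n j \<longrightarrow> v < n j"
    proof (intro ballI impI)
      fix v assume v: "v \<in> A" "v < n j * n j"
      have "v < n (j+1)" using v(2) growth[of j] by (simp add: j_def power2_eq_square)
      moreover have "\<not> (n j \<le> v \<and> v < n (j + 1))" using v(1) jK by (auto simp: A_def)
      ultimately show "v < n j" by simp
    qed
    ultimately show "\<exists>T>c. \<forall>v\<in>A. v < T*T \<longrightarrow> v < T" by blast
  qed
  have nd: "\<not> densely_lineable (Lcard A)"
  proof
    assume "densely_lineable (Lcard A)"
    then show False unfolding densely_lineable_def
      by (elim exE conjE) (rule not_dense[OF _ _ _ hA2]; assumption)
  qed
  show ?thesis
    apply (rule exI[of _ K])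
    unfolding A_def[symmetric]
    using K1 Kinf lin nd by blast
qed

end
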